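(* Let $n\ge 2$ be a power of two, $\ell\ge1$ an integer, and $N$ a positive integer multiple of $2n$. Then the distribution $\mathbf{D}_{n,\ell}$ can be sampled exactly by a sampler making two adaptive probes (per output bit) to independent uniform symbols from $[N]$.
   Context: Distribution $\mathbf{D}_{n,\ell}$: for $n\ge2$ a power of two and integer $\ell\ge1$, $\mathbf{D}_{n,\ell}$ is the distribution over $(\mathbf{i}^{(1)},\dots,\mathbf{i}^{(\ell)},\mathbf{x},\mathbf{y}^{(1)},\dots,\mathbf{y}^{(\ell)})\in\{0,1\}^{\ell\log n+(\ell+1)n}$ where each $\mathbf{i}^{(j)}$ is independently uniform on $\{0,1\}^{\log n}$ (identified with an element of $[n]$, equivalently of $\mathbb{Z}_n$, via a fixed bijection), $\mathbf{x}$ is uniform on $\{0,1\}^n$ independent of the shifts, and $\mathbf{y}^{(j)}_k=\mathbf{x}_{k+\mathbf{i}^{(j)}\bmod n}$ for all $j\in[\ell]$, $k\in[n]$ (indices of $\mathbf{x}$ taken modulo $n$). Logarithms are base 2. A sampler making two adaptive probes to independent uniform symbols from $[N]$ is given an arbitrarily long sequence $R_1,R_2,\dots$ of independent uniform elements of $[N]$; each output bit is computed by reading one symbol $R_a$ at a fixed position $a$ (depending only on the output index), then reading one symbol $R_b$ whose position $b$ may depend on the value of $R_a$, and outputting a function of the two read values; it samples $\mathbf{D}$ exactly if its output distribution equals $\mathbf{D}$. *)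

theory Defs
  imports "HOL-Probability.Probability"
begin

text \<open>Shifts and indices live in {0..<n} (= Z_n);
  enc is the fixed bijection from {0..<n} to bit strings of length log n.\<close>
definition D_dist :: "nat \<Rightarrow> nat \<Rightarrow> (nat \<Rightarrow> bool list) \<Rightarrow> bool list pmf" where
  "D_dist n l enc =
     pmf_of_set {is. length is = l \<and> set is \<subseteq> {0..<n}} \<bind> (\<lambda>is.
     pmf_of_set {xs :: bool list. length xs = n} \<bind> (\<lambda>x.
     return_pmf (concat (map enc is) @ x @
                 concat (map (\<lambda>i. map (\<lambda>k. x ! ((k + i) mod n)) [0..<n]) is))))"

text \<open>A two-adaptive-probe sampler with m output bits reading a sequence of L
  independent uniform symbols from [N] = {0..<N}: output bit t reads R ! (a t),
  then R ! (b t v) where v is the value just read, and outputs f t v w.\<close>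
definition two_probe_valid :: "nat \<Rightarrow> nat \<Rightarrow> nat \<Rightarrow> (nat \<Rightarrow> nat) \<Rightarrow> (nat \<Rightarrow> nat \<Rightarrow> nat) \<Rightarrow> bool" where
  "two_probe_valid N L m a b \<longleftrightarrow>
     (\<forall>t<m. a t < L \<and> (\<forall>v<N. b t v < L))"

definition two_probe_output :: "nat \<Rightarrow> nat \<Rightarrow> nat \<Rightarrow> (nat \<Rightarrow> nat) \<Rightarrow> (nat \<Rightarrow> nat \<Rightarrow> nat)
     \<Rightarrow> (nat \<Rightarrow> nat \<Rightarrow> nat \<Rightarrow> bool) \<Rightarrow> bool list pmf" where
  "two_probe_output N L m a b f =
     map_pmf (\<lambda>R. map (\<lambda>t. f t (R ! a t) (R ! b t (R ! a t))) [0..<m])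
             (pmf_of_set {R. length R = L \<and> set R \<subseteq> {0..<N}})"

end

theory Submission
  imports Defs
begin

definition ULS :: "nat \<Rightarrow> 'a set \<Rightarrow> 'a list pmf" where
  "ULS L S = pmf_of_set {R. length R = L \<and> set R \<subseteq> S}"

lemma lists_fin: "finite S \<Longrightarrow> finite {R. length R = L \<and> set R \<subseteq> S}"
  using finite_lists_length_eq[of S L] by (simp add: conj_commute)

lemma lists_ne: "S \<noteq> {} \<Longrightarrow> {R. length R = L \<and> set R \<subseteq> S} \<noteq> {}"
proof -
  assume "S \<noteq> {}" then obtain x where "x \<in> S" by auto
  then have "replicate L x \<in> {R. length R = L \<and> set R \<subseteq> S}" by auto
  then show ?thesis by blast
qed

lemma pair_pmf_of_set:
  assumes "finite A" "A \<noteq> {}" "finite B" "B \<noteq> {}"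
  shows "pair_pmf (pmf_of_set A) (pmf_of_set B) = pmf_of_set (A \<times> B)"
proof (rule pmf_eqI)
  fix i :: "'a \<times> 'b"
  obtain x y where i: "i = (x, y)" by (cases i)
  show "pmf (pair_pmf (pmf_of_set A) (pmf_of_set B)) i = pmf (pmf_of_set (A \<times> B)) i"
    using assms by (simp add: i pmf_pair card_cartesian_product indicator_def)
qed

lemma ULS_0: "ULS 0 S = return_pmf []"
proof -
  have "{R. length R = 0 \<and> set R \<subseteq> S} = {[]}" by auto
  then show ?thesis unfolding ULS_def by (simp add: pmf_of_set_singleton)
qed

lemma ULS_Suc:
  assumes "finite S" "S \<noteq> {}"
  shows "ULS (Suc L) S = map_pmf (\<lambda>(x, R). x # R) (pair_pmf (pmf_of_set S) (ULS L S))"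
proof -
  have "pair_pmf (pmf_of_set S) (ULS L S) = pmf_of_set (S \<times> {R. length R = L \<and> set R \<subseteq> S})"
    unfolding ULS_def using assms lists_fin[OF assms(1)] lists_ne[OF assms(2)] by (intro pair_pmf_of_set) auto
  moreover have "map_pmf (\<lambda>(x, R). x # R) (pmf_of_set (S \<times> {R. length R = L \<and> set R \<subseteq> S}))
     = pmf_of_set ((\<lambda>(x, R). x # R) ` (S \<times> {R. length R = L \<and> set R \<subseteq> S}))"
    using assms lists_fin[OF assms(1)] lists_ne[OF assms(2)] by (intro map_pmf_of_set_inj) (auto simp: inj_on_def)
  moreover have "(\<lambda>(x, R). x # R) ` (S \<times> {R. length R = L \<and> set R \<subseteq> S}) = {R. length R = Suc L \<and> set R \<subseteq> S}"
  proof (rule set_eqI, rule iffI)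
    fix R assume "R \<in> {R. length R = Suc L \<and> set R \<subseteq> S}"
    then show "R \<in> (\<lambda>(x, R). x # R) ` (S \<times> {R. length R = L \<and> set R \<subseteq> S})"
      by (cases R) (auto intro!: image_eqI[where x="(hd R, tl R)"])
  qed auto
  ultimately show ?thesis unfolding ULS_def by simp
qed

lemma ULS_map:
  assumes "finite S" "S \<noteq> {}" "finite T" "T \<noteq> {}"
    and g: "map_pmf g (pmf_of_set S) = pmf_of_set T"
  shows "map_pmf (map g) (ULS L S) = ULS L T"
proof (induction L)
  case 0 then show ?case by (simp add: ULS_0)
next
  case (Suc L)
  have "map_pmf (map g) (ULS (Suc L) S) =
     map_pmf (\<lambda>(x, R). x # R) (map_pmf (\<lambda>(a, b). (g a, map g b)) (pair_pmf (pmf_of_set S) (ULS L S)))"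
    by (simp add: ULS_Suc assms map_pmf_comp case_prod_beta)
  also have "\<dots> = ULS (Suc L) T"
    by (simp only: map_pair g Suc ULS_Suc[OF assms(3,4)])
  finally show ?case .
qed

lemma ULS_append:
  assumes "finite S" "S \<noteq> {}"
  shows "ULS (l + n) S = bind_pmf (ULS l S) (\<lambda>a. bind_pmf (ULS n S) (\<lambda>b. return_pmf (a @ b)))"
proof (induction l)
  case 0 then show ?case by (simp add: ULS_0 bind_return_pmf bind_return_pmf')
next
  case (Suc l)
  have "ULS (Suc l + n) S = map_pmf (\<lambda>(x, R). x # R) (pair_pmf (pmf_of_set S) (ULS (l + n) S))"
    using ULS_Suc[OF assms] by simp
  also have "\<dots> = bind_pmf (ULS (Suc l) S) (\<lambda>a. bind_pmf (ULS n S) (\<lambda>b. return_pmf (a @ b)))"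
    unfolding Suc ULS_Suc[OF assms] pair_pmf_def map_bind_pmf bind_assoc_pmf
    by (simp add: bind_return_pmf bind_assoc_pmf map_bind_pmf)
  finally show ?case .
qed

lemma mod_uniform:
  assumes "(m::nat) > 0" "m dvd N" "N > 0"
  shows "map_pmf (\<lambda>v. v mod m) (pmf_of_set {0..<N}) = pmf_of_set {0..<m}"
proof -
  obtain q where N: "N = m * q" using assms by (auto elim: dvdE)
  with assms have q: "q > 0" by auto
  have bij: "bij_betw (\<lambda>(r, s). r + m * s) ({0..<m} \<times> {0..<q}) {0..<N}"
  proof (rule bij_betwI[where g="\<lambda>v. (v mod m, v div m)"])
    show "(\<lambda>(r, s). r + m * s) \<in> {0..<m} \<times> {0..<q} \<rightarrow> {0..<N}"
    proof
      fix x assume "x \<in> {0..<m} \<times> {0..<q}"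
      then obtain r s where x: "x = (r, s)" "r < m" "s < q" by auto
      have "r + m * s < m + m * s" using x by simp
      also have "\<dots> = m * (s + 1)" by simp
      also have "\<dots> \<le> m * q" using x by (intro mult_le_mono2) simp
      finally show "(case x of (r, s) \<Rightarrow> r + m * s) \<in> {0..<N}" using x N by simp
    qed
    show "(\<lambda>v. (v mod m, v div m)) \<in> {0..<N} \<rightarrow> {0..<m} \<times> {0..<q}"
      using assms N by (auto simp: div_less_iff_less_mult mult.commute)
  qed (use assms in auto)
  have "pmf_of_set {0..<N} = map_pmf (\<lambda>(r, s). r + m * s) (pmf_of_set ({0..<m} \<times> {0..<q}))"
    using map_pmf_of_set_bij_betw[OF bij] q assms by simp
  also have "\<dots> = map_pmf (\<lambda>(r, s). r + m * s) (pair_pmf (pmf_of_set {0..<m}) (pmf_of_set {0..<q}))"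
    using assms q by (simp add: pair_pmf_of_set)
  finally have "map_pmf (\<lambda>v. v mod m) (pmf_of_set {0..<N}) =
     map_pmf (\<lambda>x. (case x of (r, s) \<Rightarrow> r + m * s) mod m) (pair_pmf (pmf_of_set {0..<m}) (pmf_of_set {0..<q}))"
    by (simp add: map_pmf_comp)
  also have "\<dots> = map_pmf fst (pair_pmf (pmf_of_set {0..<m}) (pmf_of_set {0..<q}))"
    using assms q by (intro map_pmf_cong) auto
  also have "\<dots> = pmf_of_set {0..<m}" by (rule map_fst_pair_pmf)
  finally show ?thesis .
qed

lemma odd_uniform:
  assumes "(2::nat) dvd N" "N > 0"
  shows "map_pmf odd (pmf_of_set {0..<N}) = pmf_of_set (UNIV :: bool set)"
proof -
  have "map_pmf odd (pmf_of_set {0..<N}) = map_pmf (\<lambda>r. r = 1) (map_pmf (\<lambda>v. v mod 2) (pmf_of_set {0..<N}))"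
    by (simp add: map_pmf_comp odd_iff_mod_2_eq_one)
  also have "\<dots> = map_pmf (\<lambda>r. r = (1::nat)) (pmf_of_set {0..<2})"
    using mod_uniform[of 2 N] assms by simp
  also have "\<dots> = pmf_of_set ((\<lambda>r. r = (1::nat)) ` {0..<2})"
    by (intro map_pmf_of_set_inj) (auto simp: inj_on_def)
  also have "(\<lambda>r. r = (1::nat)) ` {0..<2} = UNIV"
  proof -
    have "{0..<2::nat} = {0, 1}" by auto
    then show ?thesis by (auto simp: image_iff)
  qed
  finally show ?thesis .
qed

lemma nth_concat_uniform:
  assumes "\<forall>x\<in>set xs. length (g x) = k" "t < length xs * k"
  shows "concat (map g xs) ! t = g (xs ! (t div k)) ! (t mod k)"
  using assms
proof (induction xs arbitrary: t)
  case Nil then show ?case by simp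
next
  case (Cons x xs)
  show ?case
  proof (cases "t < k")
    case True then show ?thesis using Cons.prems by (simp add: nth_append)
  next
    case False
    then have "t - k < length xs * k" using Cons.prems by auto
    then have IH: "concat (map g xs) ! (t - k) = g (xs ! ((t - k) div k)) ! ((t - k) mod k)"
      using Cons by auto
    have k: "k > 0" using Cons.prems by (cases k) auto
    moreover have "(t - k) div k = t div k - 1" "(t - k) mod k = t mod k"
      using False k by (simp_all add: le_mod_geq le_div_geq)
    moreover have "t div k \<ge> 1" using False k by (simp add: le_div_geq)
    ultimately show ?thesis using False Cons.prems IH
      by (auto simp: nth_append nth_Cons')
  qed
qed


lemma length_concat_uniform:
  assumes "\<forall>x\<in>set xs. length (g x) = k"
  shows "length (concat (map g xs)) = length xs * k"
  using assms by (induction xs) auto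

theorem claim2:
  fixes n l N k :: nat and enc :: "nat \<Rightarrow> bool list"
  assumes "n = 2 ^ k" and "k \<ge> 1" and "l \<ge> 1" and "N > 0" and "(2 * n) dvd N"
    and "bij_betw enc {0..<n} {xs. length xs = k}"
  shows "\<exists>L a b f. two_probe_valid N L (l * k + (l + 1) * n) a b \<and>
           two_probe_output N L (l * k + (l + 1) * n) a b f = D_dist n l enc"
proof -
  define m where "m = l * k + (l + 1) * n"
  define a where "a = (\<lambda>t::nat. if t < l*k then t div k else if t < l*k+n then l + (t - l*k)
                      else (t - l*k - n) div n)"
  define b where "b = (\<lambda>(t::nat) (v::nat). if t < l*k + n then 0 else l + ((t - l*k - n) mod n + v mod n) mod n)"
  define f where "f = (\<lambda>(t::nat) (v::nat) (w::nat). if t < l*k then enc (v mod n) ! (t mod k)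
                      else if t < l*k+n then odd v else odd w)"
  define F where "F = (\<lambda>(is::nat list) (x::bool list). concat (map enc is) @ x @
                 concat (map (\<lambda>i. map (\<lambda>k. x ! ((k + i) mod n)) [0..<n]) is))"
  have n0: "n > 0" using assms(1) by simp
  have k0: "k > 0" using assms(2) by simp
  have enclen: "length (enc i) = k" if "i < n" for i
    using assms(6) that by (auto simp: bij_betw_def)
  have valid: "two_probe_valid N (l + n) m a b"
    unfolding two_probe_valid_def
  proof (intro allI impI conjI)
    fix t assume t: "t < m"
    show "a t < l + n"
    proof (cases "t < l*k")
      case True
      then have "t div k < l" using k0 by (simp add: div_less_iff_less_mult mult.commute)
      then show ?thesis using True by (simp add: a_def)
    next
      case False
      show ?thesis
      proof (cases "t < l*k+n")
        case True then show ?thesis using False by (simp add: a_def)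
      next
        case False2: False
        have "t - l*k - n < l * n" using t False False2 by (simp add: m_def algebra_simps)
        then have "(t - l*k - n) div n < l" using n0 by (simp add: div_less_iff_less_mult mult.commute)
        then show ?thesis using False False2 by (simp add: a_def)
      qed
    qed
    fix v assume "v < N"
    show "b t v < l + n" using n0 by (simp add: b_def)
  qed
  have key: "map (\<lambda>t. f t ((A @ B) ! a t) ((A @ B) ! b t ((A @ B) ! a t))) [0..<m]
      = F (map (\<lambda>v. v mod n) A) (map odd B)" if A: "length A = l" and B: "length B = n" for A B
  proof -
    let ?is = "map (\<lambda>v. v mod n) A" and ?x = "map odd B"
    have u1: "\<forall>i\<in>set ?is. length (enc i) = k" using n0 by (auto intro: enclen)
    have u2: "\<forall>i\<in>set ?is. length (map (\<lambda>k. ?x ! ((k + i) mod n)) [0..<n]) = n" by simp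
    have len1: "length (concat (map enc ?is)) = l * k"
      using length_concat_uniform[OF u1] A by simp
    have len2: "length (concat (map (\<lambda>i. map (\<lambda>k. ?x ! ((k + i) mod n)) [0..<n]) ?is)) = l * n"
      using length_concat_uniform[OF u2] A by simp
    show ?thesis
    proof (rule nth_equalityI)
      show "length (map (\<lambda>t. f t ((A @ B) ! a t) ((A @ B) ! b t ((A @ B) ! a t))) [0..<m]) =
          length (F ?is ?x)"
        using len1 len2 B by (simp add: F_def m_def algebra_simps)
      fix t assume "t < length (map (\<lambda>t. f t ((A @ B) ! a t) ((A @ B) ! b t ((A @ B) ! a t))) [0..<m])"
      then have t: "t < m" by simp
      show "map (\<lambda>t. f t ((A @ B) ! a t) ((A @ B) ! b t ((A @ B) ! a t))) [0..<m] ! t = F ?is ?x ! t"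
      proof (cases "t < l*k")
        case True
        have j: "t div k < l" using True k0 by (simp add: div_less_iff_less_mult mult.commute)
        have "concat (map enc ?is) ! t = enc (?is ! (t div k)) ! (t mod k)"
          using nth_concat_uniform[OF u1] True A by simp
        then show ?thesis using True t j A len1
          by (simp add: F_def f_def a_def nth_append)
      next
        case False
        show ?thesis
        proof (cases "t < l*k+n")
          case True
          define p where "p = t - l*k"
          have p: "p < n" "t = l*k + p" using True False by (auto simp: p_def)
          have "(A @ B) ! a t = B ! p" using p A by (simp add: a_def nth_append)
          then have "map (\<lambda>t. f t ((A @ B) ! a t) ((A @ B) ! b t ((A @ B) ! a t))) [0..<m] ! t
             = odd (B ! p)" using t p by (simp add: f_def)
          moreover have "F ?is ?x ! t = odd (B ! p)"
            using p len1 B by (simp add: F_def nth_append)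
          ultimately show ?thesis by simp
        next
          case False2: False
          define s where "s = t - l*k - n"
          have s: "s < l * n" using t False False2 by (simp add: s_def m_def algebra_simps)
          have j: "s div n < l" using s n0 by (simp add: div_less_iff_less_mult mult.commute)
          have q: "s mod n < n" using n0 by simp
          have "concat (map (\<lambda>i. map (\<lambda>k. ?x ! ((k + i) mod n)) [0..<n]) ?is) ! s
              = ?x ! ((s mod n + ?is ! (s div n)) mod n)"
            using nth_concat_uniform[OF u2] s A q by simp
          also have "\<dots> = odd (B ! ((s mod n + A ! (s div n) mod n) mod n))"
            using j A B n0 by simp
          finally have R: "concat (map (\<lambda>i. map (\<lambda>k. ?x ! ((k + i) mod n)) [0..<n]) ?is) ! s
              = odd (B ! ((s mod n + A ! (s div n) mod n) mod n))" .
          have "F ?is ?x ! t = concat (map (\<lambda>i. map (\<lambda>k. ?x ! ((k + i) mod n)) [0..<n]) ?is) ! s"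
          proof -
            have tt: "t = length (concat (map enc ?is)) + (length ?x + s)"
              using len1 B False False2 by (simp add: s_def)
            show ?thesis unfolding F_def by (subst tt) (simp only: nth_append_length_plus)
          qed
          moreover have "map (\<lambda>t. f t ((A @ B) ! a t) ((A @ B) ! b t ((A @ B) ! a t))) [0..<m] ! t
              = odd (B ! ((s mod n + A ! (s div n) mod n) mod n))"
            using False False2 t A B j n0 by (simp add: f_def a_def b_def nth_append s_def)
          ultimately show ?thesis using R by simp
        qed
      qed
    qed
  qed
  have N2: "2 dvd N" "n dvd N" using assms(5) by (auto intro: dvd_mult_left dvd_mult_right)
  have out: "two_probe_output N (l + n) m a b f = D_dist n l enc"
  proof -
    have "two_probe_output N (l + n) m a b f =
       map_pmf (\<lambda>R. map (\<lambda>t. f t (R ! a t) (R ! b t (R ! a t))) [0..<m]) (ULS (l + n) {0..<N})"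
      unfolding two_probe_output_def ULS_def ..
    also have "\<dots> = bind_pmf (ULS l {0..<N}) (\<lambda>A. bind_pmf (ULS n {0..<N}) (\<lambda>B.
        return_pmf (map (\<lambda>t. f t ((A @ B) ! a t) ((A @ B) ! b t ((A @ B) ! a t))) [0..<m])))"
      using assms(4) by (simp add: ULS_append map_bind_pmf)
    also have "\<dots> = bind_pmf (ULS l {0..<N}) (\<lambda>A. bind_pmf (ULS n {0..<N}) (\<lambda>B.
        return_pmf (F (map (\<lambda>v. v mod n) A) (map odd B))))"
    proof (intro bind_pmf_cong refl)
      fix A B assume "A \<in> set_pmf (ULS l {0..<N})" "B \<in> set_pmf (ULS n {0..<N})"
      then have "length A = l" "length B = n"
        unfolding ULS_def using lists_fin[of "{0..<N}"] lists_ne[of "{0..<N}"] assms(4) by auto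
      then show "return_pmf (map (\<lambda>t. f t ((A @ B) ! a t) ((A @ B) ! b t ((A @ B) ! a t))) [0..<m])
          = return_pmf (F (map (\<lambda>v. v mod n) A) (map odd B))" using key by simp
    qed
    also have "\<dots> = bind_pmf (map_pmf (map (\<lambda>v. v mod n)) (ULS l {0..<N})) (\<lambda>is.
        bind_pmf (map_pmf (map odd) (ULS n {0..<N})) (\<lambda>x. return_pmf (F is x)))"
      by (simp add: bind_map_pmf)
    also have "\<dots> = bind_pmf (ULS l {0..<n}) (\<lambda>is.
        bind_pmf (ULS n (UNIV :: bool set)) (\<lambda>x. return_pmf (F is x)))"
    proof -
      have "map_pmf (map (\<lambda>v. v mod n)) (ULS l {0..<N}) = ULS l {0..<n}"
        using assms(4) n0 by (intro ULS_map mod_uniform[OF n0 N2(2) assms(4)]) auto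
      moreover have "map_pmf (map odd) (ULS n {0..<N}) = ULS n (UNIV :: bool set)"
        using assms(4) by (intro ULS_map odd_uniform[OF N2(1) assms(4)]) auto
      ultimately show ?thesis by simp
    qed
    also have "\<dots> = D_dist n l enc"
      unfolding D_dist_def ULS_def F_def by simp
    finally show ?thesis .
  qed
  show ?thesis unfolding m_def[symmetric] using valid out by blast
qed

end
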